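(* Let $p$ be a prime and $b$ an integer with $0<b<p$. If $(p-b)(p-b^{-1})=pk+1$ for some integer $k>1$, then $|\mathrm{inv}_{1,b}|>4$.
   Context: Let $S=\mathbb{C}[x_1,x_2]$, $\zeta=e^{2\pi i/p}$, $G=\mathbb{Z}/p\mathbb{Z}=\langle\zeta\rangle$ acting on $S$ by $x_1\mapsto\zeta x_1$, $x_2\mapsto\zeta^bx_2$, with invariant ring $S^G_{1,b}$ (spanned by monomials $x_1^cx_2^d$ with $c+bd\equiv0\pmod p$). $\mathrm{inv}_{1,b}$ denotes the minimal set of monomial generators of $S^G_{1,b}$ as a $\mathbb{C}$-algebra: the nonconstant invariant monomials that are not a product of two nonconstant invariant monomials. $b^{-1}$ is the unique integer $0<b^{-1}<p$ with $bb^{-1}\equiv1\pmod p$. *)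

theory Defs
  imports "HOL-Number_Theory.Number_Theory"
begin

text \<open>A monomial x1^c x2^d of C[x1,x2] is represented by its exponent pair (c,d);
  multiplication of monomials is addition of exponent pairs.  The generator
  zeta of Z/pZ acts by x1 -> zeta x1, x2 -> zeta^b x2, so x1^c x2^d is invariant
  iff c + b d = 0 (mod p).\<close>

definition invariant_monomial :: "nat \<Rightarrow> nat \<Rightarrow> nat \<times> nat \<Rightarrow> bool" where
  "invariant_monomial p b m \<longleftrightarrow> [fst m + b * snd m = 0] (mod p)"

definition nonconstant :: "nat \<times> nat \<Rightarrow> bool" where
  "nonconstant m \<longleftrightarrow> m \<noteq> (0, 0)"

definition inv_gens :: "nat \<Rightarrow> nat \<Rightarrow> (nat \<times> nat) set" where
  "inv_gens p b = {m. nonconstant m \<and> invariant_monomial p b m \<and>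
      \<not> (\<exists>m1 m2. nonconstant m1 \<and> nonconstant m2 \<and> invariant_monomial p b m1 \<and>
                  invariant_monomial p b m2 \<and> m = (fst m1 + fst m2, snd m1 + snd m2))}"

definition binv :: "nat \<Rightarrow> nat \<Rightarrow> nat" where
  "binv p b = (THE x. 0 < x \<and> x < p \<and> [b * x = 1] (mod p))"

end

theory Submission
  imports Defs
begin

lemma inv_iff: "invariant_monomial p b (c,d) \<longleftrightarrow> p dvd c + b*d"
  by (simp add: invariant_monomial_def cong_0_iff)

lemma gen_intro:
  assumes "m \<noteq> (0,0)" "p dvd fst m + b * snd m"
    and "\<And>c1 d1 c2 d2. (c1,d1) \<noteq> (0,0) \<Longrightarrow> (c2,d2) \<noteq> (0,0) \<Longrightarrow> m = (c1+c2, d1+d2)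
          \<Longrightarrow> p dvd c1 + b*d1 \<Longrightarrow> p dvd c2 + b*d2 \<Longrightarrow> False"
  shows "m \<in> inv_gens p b"
  unfolding inv_gens_def nonconstant_def invariant_monomial_def cong_0_iff
proof (intro CollectI conjI notI)
  show "m = (0,0) \<Longrightarrow> False" using assms(1) by simp
  show "p dvd fst m + b * snd m" by fact
next
  assume "\<exists>m1 m2. m1 \<noteq> (0, 0) \<and> m2 \<noteq> (0, 0) \<and> p dvd fst m1 + b * snd m1 \<and>
     p dvd fst m2 + b * snd m2 \<and> m = (fst m1 + fst m2, snd m1 + snd m2)"
  then obtain m1 m2 where h: "m1 \<noteq> (0, 0)" "m2 \<noteq> (0, 0)" "p dvd fst m1 + b * snd m1"
     "p dvd fst m2 + b * snd m2" "m = (fst m1 + fst m2, snd m1 + snd m2)" by blast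
  show False
    by (rule assms(3)[of "fst m1" "snd m1" "fst m2" "snd m2"]) (use h in simp_all)
qed

lemma no_d0: fixes p c :: nat assumes "prime p" "p dvd c" "0 < c" "c < p" shows False
  using dvd_imp_le[OF assms(2,3)] assms(4) by simp

lemma no_c0: fixes p b d :: nat assumes "prime p" "0<b" "b<p" "p dvd b*d" "0 < d" "d < p" shows False
proof -
  have "p dvd b \<or> p dvd d" using assms prime_dvd_mult_iff by blast
  then show False
  proof
    assume "p dvd b" then show False using dvd_imp_le[of p b] assms(2,3) by simp
  next
    assume "p dvd d" then show False using dvd_imp_le[of p d] assms(5,6) by simp
  qed
qed

lemma fin: fixes p b :: nat assumes "prime p" shows "finite (inv_gens p b)"
proof -
  have p0: "p > 0" using assms prime_gt_0_nat by blast
  have "inv_gens p b \<subseteq> {0..p} \<times> {0..p}"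
  proof
    fix m assume m: "m \<in> inv_gens p b"
    obtain c d where md: "m = (c,d)" by fastforce
    have inv: "p dvd c + b*d" using m md by (simp add: inv_gens_def inv_iff)
    have nd: "\<And>m1 m2. nonconstant m1 \<Longrightarrow> nonconstant m2 \<Longrightarrow> invariant_monomial p b m1 \<Longrightarrow>
                  invariant_monomial p b m2 \<Longrightarrow> m = (fst m1 + fst m2, snd m1 + snd m2) \<Longrightarrow> False"
      using m unfolding inv_gens_def by blast
    have "c \<le> p"
    proof (rule ccontr)
      assume cp: "\<not> c \<le> p"
      have e: "c + b*d = ((c - p) + b*d) + p" using cp by simp
      have "p dvd (c - p) + b*d" using inv unfolding e by simp
      then have i2: "invariant_monomial p b (c-p,d)" by (simp add: inv_iff)
      have i1: "invariant_monomial p b (p,0)" by (simp add: inv_iff)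
      have n1: "nonconstant (p,0)" using p0 by (simp add: nonconstant_def)
      have n2: "nonconstant (c-p,d)" using cp by (simp add: nonconstant_def)
      have "m = (fst (p,0) + fst (c-p,d), snd (p,0) + snd (c-p,d))" using cp md by simp
      then show False using nd[OF n1 n2 i1 i2] by blast
    qed
    moreover have "d \<le> p"
    proof (rule ccontr)
      assume dp: "\<not> d \<le> p"
      have "d = (d - p) + p" using dp by simp
      then have "b*d = b*(d-p) + b*p" by (metis add_mult_distrib2)
      then have e: "c + b*d = (c + b*(d-p)) + b*p" by simp
      have "p dvd c + b*(d-p)" using inv unfolding e by simp
      then have i2: "invariant_monomial p b (c,d-p)" by (simp add: inv_iff)
      have i1: "invariant_monomial p b (0,p)" by (simp add: inv_iff)
      have n1: "nonconstant (0,p)" using p0 by (simp add: nonconstant_def)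
      have n2: "nonconstant (c,d-p)" using dp by (simp add: nonconstant_def)
      have "m = (fst (0,p) + fst (c,d-p), snd (0,p) + snd (c,d-p))" using dp md by simp
      then show False using nd[OF n1 n2 i1 i2] by blast
    qed
    ultimately show "m \<in> {0..p} \<times> {0..p}" using md by simp
  qed
  moreover have "finite ({0..p} \<times> {0..p})" by simp
  ultimately show ?thesis using finite_subset by blast
qed

theorem proposition3p16:
  fixes p b :: nat and k :: int
  assumes "prime p" and "0 < b" and "b < p"
    and "k > 1"
    and "(int p - int b) * (int p - int (binv p b)) = int p * k + 1"
  shows "card (inv_gens p b) > 4"
proof -
  define B where "B = binv p b"
  define a where "a = p - b"
  have p0: "p > 0" using assms(3) by simp
  have pk: "int p * k + 1 > 0" using assms(4) p0
    by (smt (verit, ccfv_SIG) mult_pos_pos of_nat_0_less_iff)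
  have ia: "int a = int p - int b" using assms(3) a_def by simp
  have apos: "a > 0" "a < p" using assms(2,3) a_def by auto
  have Blt: "B < p"
  proof (rule ccontr)
    assume "\<not> B < p"
    then have "int p - int B \<le> 0" by simp
    moreover have "int p - int b > 0" using assms(3) by simp
    ultimately have "(int p - int b) * (int p - int B) \<le> 0"
      by (simp add: mult_nonneg_nonpos)
    then show False using assms(5) pk B_def by simp
  qed
  define a' where "a' = p - B"
  have ia': "int a' = int p - int B" using Blt a'_def by simp
  have prod: "int a * int a' = int p * k + 1" using assms(5) ia ia' B_def by simp
  have a'le: "a' \<le> p" "a' > 0" using a'_def Blt by auto
  have a'lt: "a' < p"
  proof (rule ccontr)
    assume "\<not> a' < p"
    then have "a' = p" using a'le by simp
    then have "int p * k + 1 = int a * int p" using prod by simp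
    then have "int p dvd int p * k + 1" by simp
    then have "int p dvd 1" by (simp add: dvd_add_right_iff)
    then have "p dvd 1" by (metis of_nat_1 of_nat_dvd_iff)
    then show False using assms(1) by simp
  qed
  have a2: "a \<ge> 2"
  proof (rule ccontr)
    assume "\<not> a \<ge> 2"
    then have "a = 1" using apos by simp
    then have "int a' = int p * k + 1" using prod by simp
    moreover have "int p * k \<ge> int p" using assms(4) p0 by simp
    ultimately show False using a'le by simp
  qed
  have a'2: "a' \<ge> 2"
  proof (rule ccontr)
    assume "\<not> a' \<ge> 2"
    then have "a' = 1" using a'le by simp
    then have "int a = int p * k + 1" using prod by simp
    moreover have "int p * k \<ge> int p" using assms(4) p0 by simp
    ultimately show False using apos by simp
  qed
  define r where "r = p mod a"
  define q where "q = p div a + 1"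
  define c where "c = a - r"
  have pdec: "p = a * (p div a) + r" using r_def by simp
  have r0: "r \<noteq> 0"
  proof
    assume "r = 0"
    then have "a dvd p" using r_def by auto
    then show False using assms(1) a2 apos prime_nat_iff by auto
  qed
  have rlt: "r < a" using r_def apos by simp
  have pdiv: "p div a \<ge> 1" using div_le_mono[of a p a] apos by simp
  have q2: "q \<ge> 2" using pdiv q_def by simp
  have cpos: "c > 0" "c < a" using c_def r0 rlt by auto
  have aq: "a * (q - 1) < p" using pdec r0 q_def by simp
  have cq: "c + p = a * q" using pdec c_def q_def rlt by (simp add: algebra_simps)
  have qlt: "q < p"
  proof -
    have "2 * (q - 1) \<le> a * (q-1)" using a2 by simp
    then show ?thesis using aq q2 by linarith
  qed
  have g1: "(p,0) \<in> inv_gens p b"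
  proof (rule gen_intro)
    fix c1 d1 c2 d2
    assume h: "(c1,d1) \<noteq> (0,0)" "(c2,d2) \<noteq> (0,0)" "(p,0::nat) = (c1+c2, d1+d2)"
      "p dvd c1 + b*d1" "p dvd c2 + b*d2"
    then have "d1 = 0" "d2 = 0" by auto
    then have "c1 > 0" "c1 < p" "p dvd c1" using h by auto
    then show False using no_d0 assms(1) by blast
  qed (use p0 in auto)
  have g2: "(0,p) \<in> inv_gens p b"
  proof (rule gen_intro)
    fix c1 d1 c2 d2
    assume h: "(c1,d1) \<noteq> (0,0)" "(c2,d2) \<noteq> (0,0)" "(0::nat,p) = (c1+c2, d1+d2)"
      "p dvd c1 + b*d1" "p dvd c2 + b*d2"
    then have "c1 = 0" "c2 = 0" by auto
    then have "d1 > 0" "d1 < p" "p dvd b*d1" using h by auto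
    then show False using no_c0 assms(1,2,3) by blast
  qed (use p0 in auto)
  have g3: "(a,1) \<in> inv_gens p b"
  proof (rule gen_intro)
    fix c1 d1 c2 d2
    assume h: "(c1,d1) \<noteq> (0,0)" "(c2,d2) \<noteq> (0,0)" "(a,1) = (c1+c2, d1+d2)"
      "p dvd c1 + b*d1" "p dvd c2 + b*d2"
    then have "d1 = 0 \<or> d2 = 0" by auto
    then show False
    proof
      assume "d1 = 0"
      then have "c1 > 0" "c1 < p" "p dvd c1" using h apos by auto
      then show False using no_d0 assms(1) by blast
    next
      assume "d2 = 0"
      then have "c2 > 0" "c2 < p" "p dvd c2" using h apos by auto
      then show False using no_d0 assms(1) by blast
    qed
  qed (use apos a_def assms(3) in auto)
  have inv4: "p dvd 1 + b * a'"
  proof -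
    have "int (1 + b * a') = int p * (int a' - k)"
      using prod ia by (simp add: algebra_simps)
    then have "int p dvd int (1 + b*a')" by simp
    then show ?thesis by (simp only: of_nat_dvd_iff)
  qed
  have g4: "(1,a') \<in> inv_gens p b"
  proof (rule gen_intro)
    fix c1 d1 c2 d2
    assume h: "(c1,d1) \<noteq> (0,0)" "(c2,d2) \<noteq> (0,0)" "(1,a') = (c1+c2, d1+d2)"
      "p dvd c1 + b*d1" "p dvd c2 + b*d2"
    then have "c1 = 0 \<or> c2 = 0" by auto
    then show False
    proof
      assume "c1 = 0"
      then have "d1 > 0" "d1 < p" "p dvd b*d1" using h a'lt by auto
      then show False using no_c0 assms(1,2,3) by blast
    next
      assume "c2 = 0"
      then have "d2 > 0" "d2 < p" "p dvd b*d2" using h a'lt by auto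
      then show False using no_c0 assms(1,2,3) by blast
    qed
  qed (use inv4 in auto)
  have inv5: "p dvd c + b * q"
  proof -
    have "(c + b*q) + p = p * q" using cq a_def assms(3)
      by (metis add.commute add.left_commute add_mult_distrib le_add_diff_inverse2 less_imp_le_nat mult.commute)
    then have "p dvd (c + b*q) + p" by simp
    then show ?thesis by (simp add: dvd_add_left_iff)
  qed
  have g5: "(c,q) \<in> inv_gens p b"
  proof (rule gen_intro)
    fix c1 d1 c2 d2
    assume h: "(c1,d1) \<noteq> (0,0)" "(c2,d2) \<noteq> (0,0)" "(c,q) = (c1+c2, d1+d2)"
      "p dvd c1 + b*d1" "p dvd c2 + b*d2"
    have d1: "d1 \<noteq> 0"
    proof
      assume "d1 = 0"
      then have "c1 > 0" "c1 < p" "p dvd c1" using h cpos apos by auto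
      then show False using no_d0 assms(1) by blast
    qed
    have d2: "d2 \<noteq> 0"
    proof
      assume "d2 = 0"
      then have "c2 > 0" "c2 < p" "p dvd c2" using h cpos apos by auto
      then show False using no_d0 assms(1) by blast
    qed
    have d1q: "d1 \<le> q - 1" using h d2 by auto
    have c1c: "c1 \<le> c" using h by auto
    have "a * d1 \<le> a * (q-1)" using d1q by simp
    then have ad1: "a * d1 < p" using aq by linarith
    have "[c1 + b*d1 = 0] (mod p)" using h by (simp add: cong_0_iff)
    moreover have "[a*d1 + b*d1 = 0] (mod p)"
      using a_def assms(3) by (simp add: cong_0_iff add_mult_distrib[symmetric])
    ultimately have "[c1 + b*d1 = a*d1 + b*d1] (mod p)" by (meson cong_sym cong_trans)
    then have "[c1 = a*d1] (mod p)" by (simp add: cong_add_rcancel_nat)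
    moreover have "c1 < p" using c1c cpos apos by simp
    ultimately have "c1 = a*d1" using ad1 by (metis cong_def mod_less)
    moreover have "a*d1 \<ge> a" using d1 by simp
    ultimately show False using c1c cpos by simp
  qed (use inv5 cpos in auto)
  have ne: "(c,q) \<noteq> (1,a')"
  proof
    assume "(c,q) = (1,a')"
    then have "c = 1" "q = a'" by auto
    then have "a * a' = p + 1" using cq by simp
    then have "int (a * a') = int (p + 1)" by simp
    then have "int a * int a' = int p + 1" by simp
    then have "int p * k = int p" using prod by simp
    then show False using assms(4) p0 by simp
  qed
  let ?S = "{(p,0),(0,p),(a,1),(1,a'),(c,q)}"
  have "?S \<subseteq> inv_gens p b" using g1 g2 g3 g4 g5 by auto
  then have "card ?S \<le> card (inv_gens p b)" using fin[OF assms(1)] card_mono by blast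
  moreover have "card ?S = 5"
  proof -
    have f: "p \<noteq> 0" "a \<noteq> 0" "a \<noteq> 1" "a' \<noteq> 0" "q \<noteq> 0" "q \<noteq> 1" "c \<noteq> 0"
      using p0 apos a2 a'2 q2 cpos by auto
    have "(1,a') \<notin> {(c,q)}" using ne by auto
    moreover have "(a,1) \<notin> {(1,a'),(c,q)}" using f by simp
    moreover have "(0,p) \<notin> {(a,1),(1,a'),(c,q)}" using f by simp
    moreover have "(p,0) \<notin> {(0,p),(a,1),(1,a'),(c,q)}" using f by simp
    ultimately show ?thesis by (simp add: card_insert_if del: insert_iff)
  qed
  ultimately show ?thesis by simp
qed

end
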